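(* Let $m,t\in\mathbb N$ and $\theta\in\{0,1\}^m$. Let $\rho_{XYR}$ be a density matrix on registers $X,Y$ ($m$ qubits each) and $R$ such that $(\Pi_t^{\mathsf{EPR}}\otimes\mathds 1_R)\rho_{XYR}=\rho_{XYR}$. Let $\{\Pi_{v'}\}_{v'\in\{0,1\}^m}$ be any complete set of orthogonal projectors on $R$. Then $$\sum_{v\in\{0,1\}^m}\mathrm{Tr}\big[(H^\theta|v\rangle\langle v|_XH^\theta\otimes\mathds 1_Y\otimes\Pi_v)\rho_{XYR}\big]\le2^{-m}(m+1)^{2t},$$ i.e. when $X$ is measured in the $H^\theta$ basis (outcome $v$) and $R$ with $\{\Pi_{v'}\}$ (outcome $v'$), $\Pr[v'=v]\le2^{-m}(m+1)^{2t}$; equivalently $\mathbf H_{\min}(V\mid R)\ge m-2t\log_2(m+1)$.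
   Context: $H^\theta=H^{\theta_1}\otimes\cdots\otimes H^{\theta_m}$ with $H$ the Hadamard gate. For $a,b\in\{0,1\}^m$, $|\phi^+_{ab}\rangle=2^{-m/2}\sum_{v\in\{0,1\}^m}|v\rangle_X\otimes X^aZ^b|v\rangle_Y$ (Pauli $X^a=\bigotimes_iX^{a_i}$, $Z^b=\bigotimes_iZ^{b_i}$). $\Pi_t^{\mathsf{EPR}}=\sum_{a,b:\,w(a),w(b)\le t}|\phi^+_{ab}\rangle\langle\phi^+_{ab}|$, where $w(\cdot)$ is Hamming weight. *)

theory Defs
  imports Complex_Main "Jordan_Normal_Form.Matrix"
begin

definition dagger :: "complex mat \<Rightarrow> complex mat" where
  "dagger A = mat (dim_col A) (dim_row A) (\<lambda>(i,j). cnj (A $$ (j,i)))"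

definition tr :: "complex mat \<Rightarrow> complex" where
  "tr A = (\<Sum>i<dim_row A. A $$ (i,i))"

(* Kronecker (tensor) product; index of A is the more significant one *)
definition kron :: "complex mat \<Rightarrow> complex mat \<Rightarrow> complex mat" where
  "kron A B = mat (dim_row A * dim_row B) (dim_col A * dim_col B)
     (\<lambda>(i,j). A $$ (i div dim_row B, j div dim_col B) * B $$ (i mod dim_row B, j mod dim_col B))"

definition msum :: "nat \<Rightarrow> nat \<Rightarrow> complex mat list \<Rightarrow> complex mat" where
  "msum n k Ms = foldr (+) Ms (0\<^sub>m n k)"

definition density_matrix :: "nat \<Rightarrow> complex mat \<Rightarrow> bool" where
  "density_matrix n \<rho> \<longleftrightarrow> \<rho> \<in> carrier_mat n n \<and> dagger \<rho> = \<rho> \<and>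
     (\<forall>v \<in> carrier_vec n. 0 \<le> Re (conjugate v \<bullet> (\<rho> *\<^sub>v v))) \<and> tr \<rho> = 1"

definition is_projector :: "nat \<Rightarrow> complex mat \<Rightarrow> bool" where
  "is_projector n P \<longleftrightarrow> P \<in> carrier_mat n n \<and> dagger P = P \<and> P * P = P"

definition hadamard :: "complex mat" where
  "hadamard = mat 2 2 (\<lambda>(i,j). (if i = 1 \<and> j = 1 then -1 else 1) / complex_of_real (sqrt 2))"

definition pauliX :: "complex mat" where
  "pauliX = mat 2 2 (\<lambda>(i,j). if i \<noteq> j then 1 else 0)"

definition pauliZ :: "complex mat" where
  "pauliZ = mat 2 2 (\<lambda>(i,j). if i = j then (if i = 0 then 1 else -1) else 0)"

definition tensor_pow :: "complex mat \<Rightarrow> bool list \<Rightarrow> complex mat" where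
  "tensor_pow G bs = foldr (\<lambda>b M. kron (if b then G else 1\<^sub>m 2) M) bs (1\<^sub>m 1)"

abbreviation Hpow :: "bool list \<Rightarrow> complex mat" where "Hpow \<theta> \<equiv> tensor_pow hadamard \<theta>"
abbreviation Xpow :: "bool list \<Rightarrow> complex mat" where "Xpow a \<equiv> tensor_pow pauliX a"
abbreviation Zpow :: "bool list \<Rightarrow> complex mat" where "Zpow b \<equiv> tensor_pow pauliZ b"

(* Computational basis ket |v> of an m-qubit register; v < 2^m encodes the bit string
   with the first qubit as most significant bit (consistent with kron). *)
definition ket :: "nat \<Rightarrow> nat \<Rightarrow> complex mat" where
  "ket m v = mat (2^m) 1 (\<lambda>(i,j). if i = v then 1 else 0)"

definition hamming_weight :: "bool list \<Rightarrow> nat" where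
  "hamming_weight a = length (filter id a)"

definition epr_ket :: "nat \<Rightarrow> bool list \<Rightarrow> bool list \<Rightarrow> complex mat" where
  "epr_ket m a b = complex_of_real (1 / sqrt (2 ^ m)) \<cdot>\<^sub>m
     msum (2^m * 2^m) 1 (map (\<lambda>v. kron (ket m v) (Xpow a * Zpow b * ket m v)) [0..<2^m])"

definition bitstrings :: "nat \<Rightarrow> bool list list" where
  "bitstrings m = List.n_lists m [True, False]"

definition Pi_EPR :: "nat \<Rightarrow> nat \<Rightarrow> complex mat" where
  "Pi_EPR m t = msum (2^m * 2^m) (2^m * 2^m)
     (map (\<lambda>(a,b). epr_ket m a b * dagger (epr_ket m a b))
        (filter (\<lambda>(a,b). hamming_weight a \<le> t \<and> hamming_weight b \<le> t)
           (List.product (bitstrings m) (bitstrings m))))"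

end

theory Submission
  imports Defs
begin

lemma sum_pair: fixes f :: "nat \<Rightarrow> 'a::comm_monoid_add" shows "(\<Sum>i<a*b. f i) = (\<Sum>x<a. \<Sum>y<b. f (x*b+y))"
proof -
  have "(\<Sum>i<a*b. f i) = (\<Sum>x<a. sum f {x*b..<x*b+b})" using sum.nat_group[of f b a] by (simp add: mult.commute)
  also have "\<dots> = (\<Sum>x<a. \<Sum>y<b. f (x*b+y))"
  proof (rule sum.cong[OF refl])
    fix x
    have "sum f {0 + x*b..<b + x*b} = sum (\<lambda>i. f (i + x*b)) {0..<b}"
      by (rule sum.shift_bounds_nat_ivl)
    then show "sum f {x*b..<x*b+b} = (\<Sum>y<b. f (x*b+y))"
      by (simp add: atLeast0LessThan add.commute)
  qed
  finally show ?thesis .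
qed

lemma dagger_dim[simp]: "dim_row (dagger A) = dim_col A" "dim_col (dagger A) = dim_row A"
  by (auto simp: dagger_def)

lemma dagger_index[simp]: "i < dim_col A \<Longrightarrow> j < dim_row A \<Longrightarrow> dagger A $$ (i,j) = cnj (A $$ (j,i))"
  unfolding dagger_def by simp

lemma dagger_carrier[simp]: "A \<in> carrier_mat a b \<Longrightarrow> dagger A \<in> carrier_mat b a"
  unfolding carrier_mat_def by simp

lemma dagger_dagger[simp]: "dagger (dagger A) = A"
  by (rule eq_matI) auto

lemma dagger_mult: assumes "A \<in> carrier_mat a n" "B \<in> carrier_mat n b"
  shows "dagger (A*B) = dagger B * dagger A"
  using assms by (intro eq_matI) (auto simp: scalar_prod_def ac_simps)

lemma dagger_add: assumes "A \<in> carrier_mat a b" "B \<in> carrier_mat a b"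
  shows "dagger (A+B) = dagger A + dagger B"
  using assms by (intro eq_matI) auto

lemma dagger_smult: "dagger (c \<cdot>\<^sub>m A) = cnj c \<cdot>\<^sub>m dagger A"
  by (intro eq_matI) auto

lemma dagger_one[simp]: "dagger (1\<^sub>m n) = 1\<^sub>m n"
  by (intro eq_matI) auto

lemma dagger_zero[simp]: "dagger (0\<^sub>m a b) = 0\<^sub>m b a"
  by (intro eq_matI) auto

lemma tr_comm: assumes "A \<in> carrier_mat a b" "B \<in> carrier_mat b a"
  shows "tr (A*B) = tr (B*A)"
proof -
  have "tr (A*B) = (\<Sum>i<a. \<Sum>k<b. A$$(i,k) * B$$(k,i))"
    using assms by (auto simp: tr_def scalar_prod_def atLeast0LessThan intro!: sum.cong)
  also have "\<dots> = (\<Sum>k<b. \<Sum>i<a. B$$(k,i) * A$$(i,k))"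
    by (subst sum.swap) (simp add: ac_simps)
  also have "\<dots> = tr (B*A)"
    using assms by (auto simp: tr_def scalar_prod_def atLeast0LessThan intro!: sum.cong)
  finally show ?thesis .
qed

lemma tr_add: assumes "A \<in> carrier_mat n n" "B \<in> carrier_mat n n"
  shows "tr (A+B) = tr A + tr B"
  using assms by (auto simp: tr_def sum.distrib)

lemma tr_smult: "A \<in> carrier_mat n n \<Longrightarrow> tr (c \<cdot>\<^sub>m A) = c * tr A"
  by (auto simp: tr_def sum_distrib_left intro!: sum.cong)

lemma tr_zero[simp]: "tr (0\<^sub>m n n) = 0"
  by (auto simp: tr_def)

lemma kron_dim[simp]: "dim_row (kron A B) = dim_row A * dim_row B" "dim_col (kron A B) = dim_col A * dim_col B"
  by (auto simp: kron_def)

lemma kron_index[simp]: "i < dim_row A * dim_row B \<Longrightarrow> j < dim_col A * dim_col B \<Longrightarrow>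
   kron A B $$ (i,j) = A $$ (i div dim_row B, j div dim_col B) * B $$ (i mod dim_row B, j mod dim_col B)"
  by (auto simp: kron_def)

lemma kron_carrier[simp]: "A \<in> carrier_mat a b \<Longrightarrow> B \<in> carrier_mat c e \<Longrightarrow> kron A B \<in> carrier_mat (a*c) (b*e)"
  unfolding carrier_mat_def by simp

lemma div_lt: "i < a * b \<Longrightarrow> i div b < (a::nat)"
  by (simp add: less_mult_imp_div_less)

lemma mod_lt: "i < a * b \<Longrightarrow> i mod b < (b::nat)"
  by (cases "b = 0") auto

lemma kron_mult: assumes A: "A \<in> carrier_mat a1 a2" and B: "B \<in> carrier_mat b1 b2"
  and C: "C \<in> carrier_mat a2 a3" and D: "D \<in> carrier_mat b2 b3"
  shows "kron A B * kron C D = kron (A*C) (B*D)"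
proof (rule eq_matI)
  fix i j assume i: "i < dim_row (kron (A*C) (B*D))" and j: "j < dim_col (kron (A*C) (B*D))"
  have i': "i < a1*b1" and j': "j < a3*b3" using i j A B C D by auto
  have "(kron A B * kron C D) $$ (i,j) = (\<Sum>k<a2*b2. kron A B $$ (i,k) * kron C D $$ (k,j))"
    using i' j' A B C D by (auto simp: scalar_prod_def atLeast0LessThan intro!: sum.cong)
  also have "\<dots> = (\<Sum>x<a2. \<Sum>y<b2. kron A B $$ (i,x*b2+y) * kron C D $$ (x*b2+y,j))"
    by (rule sum_pair)
  also have "\<dots> = (\<Sum>x<a2. \<Sum>y<b2. (A $$ (i div b1, x) * C $$ (x, j div b3)) * (B $$ (i mod b1, y) * D $$ (y, j mod b3)))"
  proof (intro sum.cong refl)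
    fix x y assume x: "x \<in> {..<a2}" and y: "y \<in> {..<b2}"
    have xy: "x*b2+y < a2*b2"
    proof -
      have "x*b2 + y < (x+1)*b2" using y by simp
      also have "(x+1)*b2 \<le> a2*b2" using x by (intro mult_le_mono1) simp
      finally show ?thesis .
    qed
    have "(x*b2+y) div b2 = x" "(x*b2+y) mod b2 = y" using y by auto
    then show "kron A B $$ (i,x*b2+y) * kron C D $$ (x*b2+y,j) = (A $$ (i div b1, x) * C $$ (x, j div b3)) * (B $$ (i mod b1, y) * D $$ (y, j mod b3))"
      using A B C D i' j' xy by (simp add: ac_simps)
  qed
  also have "\<dots> = (\<Sum>x<a2. A $$ (i div b1, x) * C $$ (x, j div b3)) * (\<Sum>y<b2. B $$ (i mod b1, y) * D $$ (y, j mod b3))"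
    by (simp only: sum_product)
  also have "\<dots> = kron (A*C) (B*D) $$ (i,j)"
    using A B C D i' j' div_lt[OF i'] mod_lt[OF i'] div_lt[OF j'] mod_lt[OF j']
    by (simp add: scalar_prod_def atLeast0LessThan)
  finally show "(kron A B * kron C D) $$ (i,j) = kron (A*C) (B*D) $$ (i,j)" .
qed (use A B C D in simp)+

lemma dagger_kron: "dagger (kron A B) = kron (dagger A) (dagger B)"
proof (rule eq_matI)
  fix i j assume i: "i < dim_row (kron (dagger A) (dagger B))" and j: "j < dim_col (kron (dagger A) (dagger B))"
  then have i': "i < dim_col A * dim_col B" and j': "j < dim_row A * dim_row B" by auto
  show "dagger (kron A B) $$ (i,j) = kron (dagger A) (dagger B) $$ (i,j)"
    using i' j' div_lt[OF i'] mod_lt[OF i'] div_lt[OF j'] mod_lt[OF j'] by simp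
qed auto

lemma kron_one: "kron (1\<^sub>m a) (1\<^sub>m b) = 1\<^sub>m (a*b)"
proof (rule eq_matI)
  fix i j assume i: "i < dim_row (1\<^sub>m (a*b))" and j: "j < dim_col (1\<^sub>m (a*b))"
  then have i': "i < a*b" and j': "j < a*b" by auto
  have "(i div b = j div b \<and> i mod b = j mod b) = (i = j)"
    by (metis div_mult_mod_eq)
  then show "kron (1\<^sub>m a) (1\<^sub>m b) $$ (i,j) = 1\<^sub>m (a*b) $$ (i,j)"
    using i' j' div_lt[OF i'] mod_lt[OF i'] div_lt[OF j'] mod_lt[OF j'] by auto
qed auto

lemma kron_add_left: assumes "A \<in> carrier_mat a b" "A' \<in> carrier_mat a b"
  shows "kron (A + A') B = kron A B + kron A' B"
proof (rule eq_matI)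
  fix i j assume "i < dim_row (kron A B + kron A' B)" "j < dim_col (kron A B + kron A' B)"
  then have i': "i < a * dim_row B" and j': "j < b * dim_col B" using assms by auto
  show "kron (A + A') B $$ (i,j) = (kron A B + kron A' B) $$ (i,j)"
    using assms i' j' div_lt[OF i'] mod_lt[OF i'] div_lt[OF j'] mod_lt[OF j'] by (simp add: algebra_simps)
qed (use assms in auto)

lemma kron_smult_left: "kron (c \<cdot>\<^sub>m A) B = c \<cdot>\<^sub>m kron A B"
proof (rule eq_matI)
  fix i j assume "i < dim_row (c \<cdot>\<^sub>m kron A B)" "j < dim_col (c \<cdot>\<^sub>m kron A B)"
  then have i': "i < dim_row A * dim_row B" and j': "j < dim_col A * dim_col B" by auto
  show "kron (c \<cdot>\<^sub>m A) B $$ (i,j) = (c \<cdot>\<^sub>m kron A B) $$ (i,j)"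
    using i' j' div_lt[OF i'] mod_lt[OF i'] div_lt[OF j'] mod_lt[OF j'] by (simp add: algebra_simps)
qed auto

lemma kron_zero_left: "kron (0\<^sub>m a b) B = 0\<^sub>m (a * dim_row B) (b * dim_col B)"
proof (rule eq_matI)
  fix i j assume "i < dim_row (0\<^sub>m (a * dim_row B) (b * dim_col B))" "j < dim_col (0\<^sub>m (a * dim_row B) (b * dim_col B))"
  then have i': "i < a * dim_row B" and j': "j < b * dim_col B" by auto
  show "kron (0\<^sub>m a b) B $$ (i,j) = 0\<^sub>m (a * dim_row B) (b * dim_col B) $$ (i,j)"
    using i' j' div_lt[OF i'] mod_lt[OF i'] div_lt[OF j'] mod_lt[OF j'] by simp
qed auto

lemma kron_11: assumes "A \<in> carrier_mat 1 1" shows "kron A B = A $$ (0,0) \<cdot>\<^sub>m B"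
  using assms by (intro eq_matI) auto

lemma msum_Nil[simp]: "msum n k [] = 0\<^sub>m n k" by (simp add: msum_def)
lemma msum_Cons[simp]: "msum n k (M # Ms) = M + msum n k Ms" by (simp add: msum_def)

lemma msum_carrier[simp]: "(\<And>M. M \<in> set Ms \<Longrightarrow> M \<in> carrier_mat n k) \<Longrightarrow> msum n k Ms \<in> carrier_mat n k"
  by (induction Ms) auto

lemma msum_mult_left: assumes "A \<in> carrier_mat a n" "\<And>M. M \<in> set Ms \<Longrightarrow> M \<in> carrier_mat n k"
  shows "A * msum n k Ms = msum a k (map ((*) A) Ms)"
  using assms(2)
proof (induction Ms)
  case Nil then show ?case using assms(1) by auto
next
  case (Cons M Ms)
  then show ?case using assms(1) by (simp add: mult_add_distrib_mat[where nr=a and n=n and nc=k])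
qed

lemma msum_mult_right: assumes "B \<in> carrier_mat k q" "\<And>M. M \<in> set Ms \<Longrightarrow> M \<in> carrier_mat n k"
  shows "msum n k Ms * B = msum n q (map (\<lambda>M. M * B) Ms)"
  using assms(2)
proof (induction Ms)
  case Nil then show ?case using assms(1) by auto
next
  case (Cons M Ms)
  then show ?case using assms(1) by (simp add: add_mult_distrib_mat[where nr=n and n=k and nc=q])
qed

lemma dagger_msum: assumes "\<And>M. M \<in> set Ms \<Longrightarrow> M \<in> carrier_mat n k"
  shows "dagger (msum n k Ms) = msum k n (map dagger Ms)"
  using assms
proof (induction Ms)
  case Nil then show ?case by auto
next
  case (Cons M Ms)
  then show ?case by (simp add: dagger_add[of _ n k])
qed

lemma kron_msum_left: assumes "\<And>M. M \<in> set Ms \<Longrightarrow> M \<in> carrier_mat n k"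
  shows "kron (msum n k Ms) B = msum (n * dim_row B) (k * dim_col B) (map (\<lambda>M. kron M B) Ms)"
  using assms
proof (induction Ms)
  case Nil then show ?case by (simp add: kron_zero_left)
next
  case (Cons M Ms)
  then show ?case by (simp add: kron_add_left[of _ n k])
qed

lemma tr_msum: assumes "\<And>M. M \<in> set Ms \<Longrightarrow> M \<in> carrier_mat n n"
  shows "tr (msum n n Ms) = sum_list (map tr Ms)"
  using assms
proof (induction Ms)
  case Nil then show ?case by auto
next
  case (Cons M Ms)
  then show ?case by (simp add: tr_add[of _ n])
qed

lemma smult_msum: assumes "\<And>M. M \<in> set Ms \<Longrightarrow> M \<in> carrier_mat n k"
  shows "c \<cdot>\<^sub>m msum n k Ms = msum n k (map (\<lambda>M. c \<cdot>\<^sub>m M) Ms)"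
  using assms
proof (induction Ms)
  case Nil then show ?case by auto
next
  case (Cons M Ms)
  then show ?case by (simp add: add_smult_distrib_left_mat[of _ n k])
qed

lemma msum_index: assumes "\<And>M. M \<in> set Ms \<Longrightarrow> M \<in> carrier_mat n k" "i < n" "j < k"
  shows "msum n k Ms $$ (i,j) = sum_list (map (\<lambda>M. M $$ (i,j)) Ms)"
  using assms
proof (induction Ms)
  case Nil then show ?case by auto
next
  case (Cons M Ms)
  have "msum n k Ms \<in> carrier_mat n k" using Cons.prems by (intro msum_carrier) auto
  then have d: "dim_row (msum n k Ms) = n" "dim_col (msum n k Ms) = k" by auto
  have IH: "msum n k Ms $$ (i,j) = sum_list (map (\<lambda>M. M $$ (i,j)) Ms)"
    by (rule Cons.IH) (use Cons.prems in auto)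
  show ?case using d IH Cons.prems(2,3) by simp
qed

lemma hadamard_carrier[simp]: "hadamard \<in> carrier_mat 2 2" by (simp add: hadamard_def)
lemma pauliX_carrier[simp]: "pauliX \<in> carrier_mat 2 2" by (simp add: pauliX_def)
lemma pauliZ_carrier[simp]: "pauliZ \<in> carrier_mat 2 2" by (simp add: pauliZ_def)

lemma tensor_pow_Nil[simp]: "tensor_pow G [] = 1\<^sub>m 1" by (simp add: tensor_pow_def)
lemma tensor_pow_Cons[simp]: "tensor_pow G (b # bs) = kron (if b then G else 1\<^sub>m 2) (tensor_pow G bs)"
  by (simp add: tensor_pow_def)

lemma tensor_pow_carrier[simp]: "G \<in> carrier_mat 2 2 \<Longrightarrow> tensor_pow G bs \<in> carrier_mat (2^length bs) (2^length bs)"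
proof (induction bs)
  case Nil then show ?case by simp
next
  case (Cons b bs)
  have "(if b then G else 1\<^sub>m 2) \<in> carrier_mat 2 2" using Cons by auto
  from kron_carrier[OF this Cons.IH[OF Cons.prems]] show ?case by simp
qed

lemma dagger_tensor_pow: "dagger (tensor_pow G bs) = tensor_pow (dagger G) bs"
  by (induction bs) (auto simp: dagger_kron)

lemma tensor_pow_unitary: assumes "G \<in> carrier_mat 2 2" "dagger G * G = 1\<^sub>m 2"
  shows "dagger (tensor_pow G bs) * tensor_pow G bs = 1\<^sub>m (2^length bs)"
proof (induction bs)
  case Nil then show ?case by (simp add: kron_one[of 1 1, simplified])
next
  case (Cons b bs)
  let ?A = "if b then G else 1\<^sub>m 2" let ?T = "tensor_pow G bs"
  have A: "?A \<in> carrier_mat 2 2" using assms by auto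
  have T: "?T \<in> carrier_mat (2^length bs) (2^length bs)" using assms by auto
  have AA: "dagger ?A * ?A = 1\<^sub>m 2" using assms by auto
  have "dagger (tensor_pow G (b#bs)) * tensor_pow G (b#bs) = kron (dagger ?A) (dagger ?T) * kron ?A ?T"
    by (simp add: dagger_kron)
  also have "\<dots> = kron (dagger ?A * ?A) (dagger ?T * ?T)"
    by (rule kron_mult[OF dagger_carrier[OF A] dagger_carrier[OF T] A T])
  also have "\<dots> = 1\<^sub>m (2^length (b#bs))" using AA Cons.IH by (simp add: kron_one)
  finally show ?case .
qed

lemma mat2_eqI: assumes "A \<in> carrier_mat 2 2" "B \<in> carrier_mat 2 2"
  "A$$(0,0) = B$$(0,0)" "A$$(0,1) = B$$(0,1)" "A$$(1,0) = B$$(1,0)" "A$$(1,1) = B$$(1,1)"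
  shows "A = B"
proof (rule eq_matI)
  fix i j assume "i < dim_row B" "j < dim_col B"
  then have "i < 2" "j < 2" using assms(2) by auto
  then have "(i = 0 \<or> i = 1) \<and> (j = 0 \<or> j = 1)" by linarith
  then show "A $$ (i,j) = B $$ (i,j)" using assms(3-6) by blast
qed (use assms in simp)+

lemma mult2_index: assumes "A \<in> carrier_mat 2 2" "B \<in> carrier_mat 2 2" "i < 2" "j < 2"
  shows "(A*B)$$(i,j) = A$$(i,0)*B$$(0,j) + A$$(i,1)*B$$(1,j)"
proof -
  have "(A*B)$$(i,j) = (\<Sum>k\<in>{0..<2}. A$$(i,k)*B$$(k,j))"
    using assms by (simp add: scalar_prod_def)
  also have "\<dots> = A$$(i,0)*B$$(0,j) + A$$(i,1)*B$$(1,j)"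
    by (simp add: numeral_2_eq_2)
  finally show ?thesis .
qed

lemma sqrt2_sq: "complex_of_real (sqrt 2) * complex_of_real (sqrt 2) = 2"
proof -
  have "complex_of_real (sqrt 2) * complex_of_real (sqrt 2) = complex_of_real (sqrt 2 * sqrt 2)"
    by (simp only: of_real_mult)
  also have "sqrt 2 * sqrt 2 = (2::real)" by simp
  finally show ?thesis by simp
qed

definition hh :: complex where "hh = 1 / complex_of_real (sqrt 2)"

lemma hh_sq: "hh * hh = 1/2"
proof -
  have "hh*hh = 1/(complex_of_real (sqrt 2) * complex_of_real (sqrt 2))" unfolding hh_def by simp
  also have "\<dots> = 1/2" by (simp only: sqrt2_sq)
  finally show ?thesis .
qed

lemma hadamard_dim: "dim_row hadamard = 2" "dim_col hadamard = 2" by (simp_all add: hadamard_def)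

lemma hadamard_idx: "hadamard$$(0,0) = hh" "hadamard$$(0,1) = hh" "hadamard$$(1,0) = hh" "hadamard$$(1,1) = - hh"
  by (simp_all add: hadamard_def hh_def)

lemma cnj_hh[simp]: "cnj hh = hh"
proof -
  have "hh = complex_of_real (1 / sqrt 2)" unfolding hh_def by (simp only: of_real_divide of_real_1)
  then show ?thesis by (metis complex_cnj_complex_of_real)
qed

lemma dagger2_idx: assumes "A \<in> carrier_mat 2 2"
  shows "dagger A$$(0,0) = cnj (A$$(0,0))" "dagger A$$(0,1) = cnj (A$$(1,0))"
        "dagger A$$(1,0) = cnj (A$$(0,1))" "dagger A$$(1,1) = cnj (A$$(1,1))"
proof -
  have d: "dim_row A = 2" "dim_col A = 2" using assms by auto
  show "dagger A$$(0,0) = cnj (A$$(0,0))" using d by simp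
  show "dagger A$$(0,1) = cnj (A$$(1,0))" using d by simp
  show "dagger A$$(1,0) = cnj (A$$(0,1))" using d by simp
  show "dagger A$$(1,1) = cnj (A$$(1,1))" using d by simp
qed

lemma dagger_hadamard[simp]: "dagger hadamard = hadamard"
proof (rule mat2_eqI)
  show "dagger hadamard \<in> carrier_mat 2 2" by simp
qed (simp_all only: dagger2_idx[OF hadamard_carrier] hadamard_idx cnj_hh complex_cnj_minus hadamard_carrier)

lemma hadamard_sq: "hadamard * hadamard = 1\<^sub>m 2"
proof (rule mat2_eqI)
  show "hadamard * hadamard \<in> carrier_mat 2 2" by (rule mult_carrier_mat[of _ 2 2]) simp_all
qed (simp_all only: mult2_index[OF hadamard_carrier hadamard_carrier] hadamard_idx, simp_all add: hh_sq)

lemma pauliX_unitary: "dagger pauliX * pauliX = 1\<^sub>m 2"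
proof (rule mat2_eqI)
  show "dagger pauliX * pauliX \<in> carrier_mat 2 2" by (rule mult_carrier_mat[of _ 2 2]) simp_all
qed (simp_all add: mult2_index, simp_all add: pauliX_def)

lemma pauliZ_unitary: "dagger pauliZ * pauliZ = 1\<^sub>m 2"
proof (rule mat2_eqI)
  show "dagger pauliZ * pauliZ \<in> carrier_mat 2 2" by (rule mult_carrier_mat[of _ 2 2]) simp_all
qed (simp_all add: mult2_index, simp_all add: pauliZ_def)


lemma Hpow_carrier[simp]: "Hpow \<theta> \<in> carrier_mat (2^length \<theta>) (2^length \<theta>)"
  by simp

lemma Hpow_sq: "Hpow \<theta> * Hpow \<theta> = 1\<^sub>m (2^length \<theta>)"
proof -
  have "dagger (Hpow \<theta>) * Hpow \<theta> = 1\<^sub>m (2^length \<theta>)"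
    by (rule tensor_pow_unitary) (simp_all add: hadamard_sq)
  then show ?thesis by (simp add: dagger_tensor_pow)
qed

lemma U_carrier: "length a = m \<Longrightarrow> length b = m \<Longrightarrow> Xpow a * Zpow b \<in> carrier_mat (2^m) (2^m)"
  using tensor_pow_carrier[OF pauliX_carrier, of a] tensor_pow_carrier[OF pauliZ_carrier, of b]
  by (metis mult_carrier_mat)

lemma U_unitary: assumes "length a = m" "length b = m"
  shows "dagger (Xpow a * Zpow b) * (Xpow a * Zpow b) = 1\<^sub>m (2^m)"
proof -
  have X: "Xpow a \<in> carrier_mat (2^m) (2^m)" using assms tensor_pow_carrier[OF pauliX_carrier, of a] by simp
  have Z: "Zpow b \<in> carrier_mat (2^m) (2^m)" using assms tensor_pow_carrier[OF pauliZ_carrier, of b] by simp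
  have XX: "dagger (Xpow a) * Xpow a = 1\<^sub>m (2^m)"
    using tensor_pow_unitary[OF pauliX_carrier pauliX_unitary, of a] assms by simp
  have ZZ: "dagger (Zpow b) * Zpow b = 1\<^sub>m (2^m)"
    using tensor_pow_unitary[OF pauliZ_carrier pauliZ_unitary, of b] assms by simp
  have "dagger (Xpow a * Zpow b) * (Xpow a * Zpow b) = (dagger (Zpow b) * dagger (Xpow a)) * (Xpow a * Zpow b)"
    using dagger_mult[OF X Z] by simp
  also have "\<dots> = dagger (Zpow b) * ((dagger (Xpow a) * Xpow a) * Zpow b)"
    using X Z by (simp add: assoc_mult_mat[of _ "2^m" "2^m" _ "2^m" _ "2^m"])
  also have "\<dots> = 1\<^sub>m (2^m)" using XX ZZ Z by simp
  finally show ?thesis .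
qed

lemma ket_carrier[simp]: "ket m v \<in> carrier_mat (2^m) 1"
  unfolding ket_def carrier_mat_def by simp

lemma ket_dim[simp]: "dim_row (ket m v) = 2^m" "dim_col (ket m v) = 1"
  by (simp_all add: ket_def)

lemma ket_index: "i < 2^m \<Longrightarrow> ket m v $$ (i,0) = (if i = v then 1 else 0)"
  by (simp add: ket_def)

lemma ket_norm: assumes "v < 2^m" shows "dagger (ket m v) * ket m v = 1\<^sub>m 1"
proof (rule eq_matI)
  fix i j assume "i < dim_row (1\<^sub>m 1)" "j < dim_col (1\<^sub>m 1)"
  then have ij: "i = 0" "j = 0" by auto
  have "(dagger (ket m v) * ket m v) $$ (0,0) = (\<Sum>k\<in>{0..<2^m}. cnj (ket m v $$ (k,0)) * ket m v $$ (k,0))"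
    by (simp add: scalar_prod_def)
  also have "\<dots> = (\<Sum>k\<in>{0..<2^m}. if k = v then 1 else 0)"
    by (rule sum.cong) (simp_all add: ket_index)
  also have "\<dots> = 1" using assms by simp
  finally show "(dagger (ket m v) * ket m v) $$ (i,j) = 1\<^sub>m 1 $$ (i,j)" using ij by simp
qed simp_all

lemma quad_form: assumes "A \<in> carrier_mat N N" "x \<in> carrier_mat N 1"
  shows "(dagger x * A * x) $$ (0,0) = (\<Sum>j<N. \<Sum>i<N. cnj (x$$(j,0)) * A$$(j,i) * x$$(i,0))"
proof -
  have d: "dim_row A = N" "dim_col A = N" "dim_row x = N" "dim_col x = 1" using assms by auto
  have "(dagger x * A * x) $$ (0,0) = (\<Sum>i<N. (dagger x * A)$$(0,i) * x$$(i,0))"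
    using d by (simp add: scalar_prod_def atLeast0LessThan)
  also have "\<dots> = (\<Sum>i<N. (\<Sum>j<N. cnj (x$$(j,0)) * A$$(j,i)) * x$$(i,0))"
    by (rule sum.cong) (use d in \<open>simp_all add: scalar_prod_def atLeast0LessThan\<close>)
  also have "\<dots> = (\<Sum>i<N. \<Sum>j<N. cnj (x$$(j,0)) * A$$(j,i) * x$$(i,0))"
    by (simp add: sum_distrib_right)
  also have "\<dots> = (\<Sum>j<N. \<Sum>i<N. cnj (x$$(j,0)) * A$$(j,i) * x$$(i,0))"
    by (rule sum.swap)
  finally show ?thesis .
qed

lemma Q_eq: assumes "length \<theta> = m"
  shows "Hpow \<theta> * ket m v * dagger (ket m v) * Hpow \<theta> = (Hpow \<theta> * ket m v) * dagger (Hpow \<theta> * ket m v)"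
proof -
  have H: "Hpow \<theta> \<in> carrier_mat (2^m) (2^m)" using Hpow_carrier[of \<theta>] assms by simp
  have k: "ket m v \<in> carrier_mat (2^m) 1" by (rule ket_carrier)
  have "dagger (Hpow \<theta> * ket m v) = dagger (ket m v) * Hpow \<theta>"
    using dagger_mult[OF H k] by (simp add: dagger_tensor_pow)
  moreover have "Hpow \<theta> * ket m v * dagger (ket m v) * Hpow \<theta> = (Hpow \<theta> * ket m v) * (dagger (ket m v) * Hpow \<theta>)"
    using H k by (meson assoc_mult_mat dagger_carrier mult_carrier_mat)
  ultimately show ?thesis by simp
qed

lemma w_norm: assumes "length \<theta> = m" "v < 2^m"
  shows "dagger (Hpow \<theta> * ket m v) * (Hpow \<theta> * ket m v) = 1\<^sub>m 1"
proof -
  have H: "Hpow \<theta> \<in> carrier_mat (2^m) (2^m)" using Hpow_carrier[of \<theta>] assms by simp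
  have k: "ket m v \<in> carrier_mat (2^m) 1" by (rule ket_carrier)
  have "dagger (Hpow \<theta> * ket m v) * (Hpow \<theta> * ket m v) = (dagger (ket m v) * Hpow \<theta>) * (Hpow \<theta> * ket m v)"
    using dagger_mult[OF H k] by (simp add: dagger_tensor_pow)
  also have "\<dots> = dagger (ket m v) * (Hpow \<theta> * (Hpow \<theta> * ket m v))"
    by (rule assoc_mult_mat[OF dagger_carrier[OF k] H mult_carrier_mat[OF H k]])
  also have "\<dots> = dagger (ket m v) * ((Hpow \<theta> * Hpow \<theta>) * ket m v)"
    using assoc_mult_mat[OF H H k] by simp
  also have "\<dots> = dagger (ket m v) * ket m v" using Hpow_sq[of \<theta>] assms k by simp
  also have "\<dots> = 1\<^sub>m 1" using ket_norm assms by simp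
  finally show ?thesis .
qed

lemma rank1_props: assumes w: "w \<in> carrier_mat N 1" and nw: "dagger w * w = 1\<^sub>m 1"
  shows "dagger (w * dagger w) = w * dagger w" "(w * dagger w) * (w * dagger w) = w * dagger w"
    "tr (w * dagger w) = 1"
proof -
  show "dagger (w * dagger w) = w * dagger w" using dagger_mult[OF w dagger_carrier[OF w]] by simp
  have wd: "dagger w \<in> carrier_mat 1 N" using w by simp
  have "(w * dagger w) * (w * dagger w) = w * (dagger w * (w * dagger w))"
    by (rule assoc_mult_mat[OF w wd mult_carrier_mat[OF w wd]])
  also have "dagger w * (w * dagger w) = (dagger w * w) * dagger w"
    by (rule assoc_mult_mat[OF wd w wd, symmetric])
  finally have "(w * dagger w) * (w * dagger w) = w * ((dagger w * w) * dagger w)" .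
  then show "(w * dagger w) * (w * dagger w) = w * dagger w" using nw w by simp
  have "tr (w * dagger w) = tr (dagger w * w)" by (rule tr_comm[OF w dagger_carrier[OF w]])
  then show "tr (w * dagger w) = 1" using nw by (simp add: tr_def)
qed

lemma M_props: assumes Q: "Q \<in> carrier_mat n n" "dagger Q = Q" "Q * Q = Q"
  and P: "P \<in> carrier_mat d d" "dagger P = P" "P * P = P"
  shows "kron (kron Q (1\<^sub>m n)) P \<in> carrier_mat (n*n*d) (n*n*d)"
    "dagger (kron (kron Q (1\<^sub>m n)) P) = kron (kron Q (1\<^sub>m n)) P"
    "kron (kron Q (1\<^sub>m n)) P * kron (kron Q (1\<^sub>m n)) P = kron (kron Q (1\<^sub>m n)) P"
proof -
  have QI: "kron Q (1\<^sub>m n) \<in> carrier_mat (n*n) (n*n)" using Q(1) by simp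
  show "kron (kron Q (1\<^sub>m n)) P \<in> carrier_mat (n*n*d) (n*n*d)" using kron_carrier[OF QI P(1)] .
  show "dagger (kron (kron Q (1\<^sub>m n)) P) = kron (kron Q (1\<^sub>m n)) P"
    using Q P by (simp add: dagger_kron)
  have "kron (kron Q (1\<^sub>m n)) P * kron (kron Q (1\<^sub>m n)) P = kron (kron Q (1\<^sub>m n) * kron Q (1\<^sub>m n)) (P * P)"
    by (rule kron_mult[OF QI P(1) QI P(1)])
  also have "kron Q (1\<^sub>m n) * kron Q (1\<^sub>m n) = kron (Q*Q) (1\<^sub>m n * 1\<^sub>m n)"
    by (rule kron_mult[OF Q(1) one_carrier_mat Q(1) one_carrier_mat])
  finally show "kron (kron Q (1\<^sub>m n)) P * kron (kron Q (1\<^sub>m n)) P = kron (kron Q (1\<^sub>m n)) P"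
    using Q P by simp
qed

lemma T_carrier: assumes "U \<in> carrier_mat (2^m) (2^m)"
  shows "kron (ket m v) (U * ket m v) \<in> carrier_mat (2^m*2^m) 1"
proof -
  have "U * ket m v \<in> carrier_mat (2^m) 1" by (rule mult_carrier_mat[OF assms ket_carrier])
  from kron_carrier[OF ket_carrier this] show ?thesis by simp
qed

lemma Uket_index: assumes "U \<in> carrier_mat (2^m) (2^m)" "r < 2^m" "v < 2^m"
  shows "(U * ket m v) $$ (r,0) = U $$ (r,v)"
proof -
  have "(U * ket m v) $$ (r,0) = (\<Sum>k\<in>{0..<2^m}. U $$ (r,k) * ket m v $$ (k,0))"
    using assms by (simp add: scalar_prod_def)
  also have "\<dots> = (\<Sum>k\<in>{0..<2^m}. if k = v then U $$ (r,k) else 0)"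
    by (rule sum.cong) (simp_all add: ket_index)
  also have "\<dots> = U $$ (r,v)" using assms by simp
  finally show ?thesis .
qed

lemma epr_carrier: assumes "length a = m" "length b = m"
  shows "epr_ket m a b \<in> carrier_mat (2^m*2^m) 1"
proof -
  have U: "Xpow a * Zpow b \<in> carrier_mat (2^m) (2^m)" using U_carrier assms by blast
  have "\<And>M. M \<in> set (map (\<lambda>v. kron (ket m v) (Xpow a * Zpow b * ket m v)) [0..<2^m]) \<Longrightarrow> M \<in> carrier_mat (2^m*2^m) 1"
  proof -
    fix M assume "M \<in> set (map (\<lambda>v. kron (ket m v) (Xpow a * Zpow b * ket m v)) [0..<2^m])"
    then obtain v where "M = kron (ket m v) (Xpow a * Zpow b * ket m v)" by auto
    then show "M \<in> carrier_mat (2^m*2^m) 1" using T_carrier[OF U, of v] by (simp only:)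
  qed
  then show ?thesis unfolding epr_ket_def by (intro smult_carrier_mat msum_carrier)
qed

lemma epr_index: assumes "length a = m" "length b = m" "i < 2^m*2^m"
  shows "epr_ket m a b $$ (i,0) = complex_of_real (1 / sqrt (2^m)) * (Xpow a * Zpow b) $$ (i mod 2^m, i div 2^m)"
proof -
  let ?U = "Xpow a * Zpow b"
  let ?T = "\<lambda>v. kron (ket m v) (?U * ket m v)"
  have U: "?U \<in> carrier_mat (2^m) (2^m)" using U_carrier assms by blast
  have T: "\<And>M. M \<in> set (map ?T [0..<2^m]) \<Longrightarrow> M \<in> carrier_mat (2^m*2^m) 1"
  proof -
    fix M assume "M \<in> set (map (\<lambda>v. kron (ket m v) (Xpow a * Zpow b * ket m v)) [0..<2^m])"
    then obtain v where "M = kron (ket m v) (Xpow a * Zpow b * ket m v)" by auto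
    then show "M \<in> carrier_mat (2^m*2^m) 1" using T_carrier[OF U, of v] by (simp only:)
  qed
  have im: "i div 2^m < 2^m" "i mod 2^m < 2^m" using assms(3) by (simp_all add: div_lt mod_lt)
  have "msum (2^m*2^m) 1 (map ?T [0..<2^m]) $$ (i,0) = sum_list (map (\<lambda>M. M $$ (i,0)) (map ?T [0..<2^m]))"
    apply (rule msum_index) apply (erule T) apply (rule assms(3)) apply simp done
  also have "\<dots> = (\<Sum>v\<in>{0..<2^m}. ?T v $$ (i,0))"
    by (simp add: comp_def sum_set_upt_conv_sum_list_nat[symmetric])
  also have "\<dots> = (\<Sum>v\<in>{0..<2^m}. if v = i div 2^m then ?U $$ (i mod 2^m, i div 2^m) else 0)"
  proof (rule sum.cong[OF refl])
    fix v :: nat assume v: "v \<in> {0..<2^m}"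
    have "?T v $$ (i,0) = ket m v $$ (i div 2^m, 0) * (?U * ket m v) $$ (i mod 2^m, 0)"
      using assms(3) carrier_matD[OF U] by (simp add: kron_index)
    also have "\<dots> = (if v = i div 2^m then ?U $$ (i mod 2^m, i div 2^m) else 0)"
      using im v by (simp add: ket_index Uket_index[OF U])
    finally show "?T v $$ (i,0) = (if v = i div 2^m then ?U $$ (i mod 2^m, i div 2^m) else 0)" .
  qed
  also have "\<dots> = ?U $$ (i mod 2^m, i div 2^m)" using im by simp
  finally have "msum (2^m*2^m) 1 (map ?T [0..<2^m]) $$ (i,0) = ?U $$ (i mod 2^m, i div 2^m)" .
  moreover have "msum (2^m*2^m) 1 (map ?T [0..<2^m]) \<in> carrier_mat (2^m*2^m) 1" using T by (rule msum_carrier)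
  ultimately show ?thesis using assms(3) unfolding epr_ket_def by simp
qed

lemma xy_lt: "x < (a::nat) \<Longrightarrow> y < b \<Longrightarrow> x*b+y < a*b"
proof -
  assume x: "x < a" and y: "y < b"
  have "x*b + y < (x+1)*b" using y by simp
  also have "(x+1)*b \<le> a*b" using x by (intro mult_le_mono1) simp
  finally show ?thesis .
qed

lemma scalar_gen: assumes U: "U \<in> carrier_mat n n" and UU: "dagger U * U = 1\<^sub>m n"
  and Q: "Q \<in> carrier_mat n n" and psi: "\<psi> \<in> carrier_mat (n*n) 1"
  and pe: "\<And>i. i < n*n \<Longrightarrow> \<psi>$$(i,0) = c * U$$(i mod n, i div n)"
  shows "(dagger \<psi> * kron Q (1\<^sub>m n) * \<psi>)$$(0,0) = cnj c * c * tr Q"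
proof -
  let ?K = "kron Q (1\<^sub>m n)"
  have K: "?K \<in> carrier_mat (n*n) (n*n)" using Q by simp
  have uu: "\<And>x x'. x < n \<Longrightarrow> x' < n \<Longrightarrow> (\<Sum>y<n. cnj (U$$(y,x)) * U$$(y,x')) = (if x = x' then 1 else 0)"
  proof -
    fix x x' assume x: "x < n" and x': "x' < n"
    have "(dagger U * U)$$(x,x') = (\<Sum>y<n. cnj (U$$(y,x)) * U$$(y,x'))"
      using U x x' by (simp add: scalar_prod_def atLeast0LessThan)
    then show "(\<Sum>y<n. cnj (U$$(y,x)) * U$$(y,x')) = (if x = x' then 1 else 0)"
      using UU x x' by simp
  qed
  have Kidx: "\<And>x y x' y'. x < n \<Longrightarrow> y < n \<Longrightarrow> x' < n \<Longrightarrow> y' < n \<Longrightarrow>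
      ?K $$ (x*n+y, x'*n+y') = Q$$(x,x') * (if y = y' then 1 else 0)"
  proof -
    fix x y x' y' assume a: "x < n" "y < n" "x' < n" "y' < n"
    have "x*n+y < n*n" "x'*n+y' < n*n" using a xy_lt by auto
    then show "?K $$ (x*n+y, x'*n+y') = Q$$(x,x') * (if y = y' then 1 else 0)"
      using a Q by (simp add: kron_index)
  qed
  have pidx: "\<And>x y. x < n \<Longrightarrow> y < n \<Longrightarrow> \<psi>$$(x*n+y,0) = c * U$$(y,x)"
  proof -
    fix x y assume a: "x < n" "y < n"
    have "x*n+y < n*n" using a xy_lt by auto
    then show "\<psi>$$(x*n+y,0) = c * U$$(y,x)" using pe a by simp
  qed
  have "(dagger \<psi> * ?K * \<psi>)$$(0,0) = (\<Sum>j<n*n. \<Sum>i<n*n. cnj (\<psi>$$(j,0)) * ?K$$(j,i) * \<psi>$$(i,0))"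
    by (rule quad_form[OF K psi])
  also have "\<dots> = (\<Sum>x<n. \<Sum>y<n. \<Sum>x'<n. \<Sum>y'<n. cnj (\<psi>$$(x*n+y,0)) * ?K$$(x*n+y,x'*n+y') * \<psi>$$(x'*n+y',0))"
    by (simp only: sum_pair)
  also have "\<dots> = (\<Sum>x<n. \<Sum>y<n. \<Sum>x'<n. \<Sum>y'<n. if y = y' then cnj c * c * (cnj (U$$(y,x)) * Q$$(x,x') * U$$(y,x')) else 0)"
    by (intro sum.cong refl) (simp add: Kidx pidx)
  also have "\<dots> = (\<Sum>x<n. \<Sum>y<n. \<Sum>x'<n. cnj c * c * (cnj (U$$(y,x)) * Q$$(x,x') * U$$(y,x')))"
    by (intro sum.cong refl) simp
  also have "\<dots> = (\<Sum>x<n. \<Sum>x'<n. cnj c * c * (Q$$(x,x') * (\<Sum>y<n. cnj (U$$(y,x)) * U$$(y,x'))))"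
    by (rule sum.cong[OF refl], subst sum.swap, rule sum.cong[OF refl], simp add: sum_distrib_left ac_simps)
  also have "\<dots> = (\<Sum>x<n. \<Sum>x'<n. if x = x' then cnj c * c * Q$$(x,x) else 0)"
    by (intro sum.cong refl) (simp add: uu)
  also have "\<dots> = cnj c * c * tr Q"
    using Q by (simp add: tr_def sum_distrib_left)
  finally show ?thesis .
qed


lemma c_sq: "cnj (complex_of_real (1 / sqrt (2^m))) * complex_of_real (1 / sqrt (2^m)) = 1 / 2^m"
proof -
  have "cnj (complex_of_real (1 / sqrt (2^m))) * complex_of_real (1 / sqrt (2^m))
      = complex_of_real (1 / sqrt (2^m) * (1 / sqrt (2^m)))"
    by (simp only: complex_cnj_complex_of_real of_real_mult)
  also have "1 / sqrt (2^m) * (1 / sqrt (2^m)) = (1 / 2^m :: real)"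
    by (simp add: power_divide[symmetric])
  finally show ?thesis by simp
qed

lemma KMK: assumes psi: "\<psi> \<in> carrier_mat (n*n) 1" and Q: "Q \<in> carrier_mat n n" and P: "P \<in> carrier_mat d d"
  shows "dagger (kron \<psi> (1\<^sub>m d)) * kron (kron Q (1\<^sub>m n)) P * kron \<psi> (1\<^sub>m d)
     = (dagger \<psi> * kron Q (1\<^sub>m n) * \<psi>)$$(0,0) \<cdot>\<^sub>m P"
proof -
  have QI: "kron Q (1\<^sub>m n) \<in> carrier_mat (n*n) (n*n)" using Q by simp
  have pd: "dagger \<psi> \<in> carrier_mat 1 (n*n)" using psi by simp
  have "dagger (kron \<psi> (1\<^sub>m d)) * kron (kron Q (1\<^sub>m n)) P = kron (dagger \<psi>) (1\<^sub>m d) * kron (kron Q (1\<^sub>m n)) P"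
    by (simp add: dagger_kron)
  also have "\<dots> = kron (dagger \<psi> * kron Q (1\<^sub>m n)) (1\<^sub>m d * P)"
    by (rule kron_mult[OF pd one_carrier_mat QI P])
  finally have 1: "dagger (kron \<psi> (1\<^sub>m d)) * kron (kron Q (1\<^sub>m n)) P = kron (dagger \<psi> * kron Q (1\<^sub>m n)) P"
    using P by simp
  have pQ: "dagger \<psi> * kron Q (1\<^sub>m n) \<in> carrier_mat 1 (n*n)" using pd QI by (rule mult_carrier_mat)
  have "kron (dagger \<psi> * kron Q (1\<^sub>m n)) P * kron \<psi> (1\<^sub>m d) = kron (dagger \<psi> * kron Q (1\<^sub>m n) * \<psi>) (P * 1\<^sub>m d)"
    by (rule kron_mult[OF pQ P psi one_carrier_mat])
  also have "\<dots> = (dagger \<psi> * kron Q (1\<^sub>m n) * \<psi>)$$(0,0) \<cdot>\<^sub>m P"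
  proof -
    have "dagger \<psi> * kron Q (1\<^sub>m n) * \<psi> \<in> carrier_mat 1 1" using pQ psi by (rule mult_carrier_mat)
    then show ?thesis using P by (simp add: kron_11)
  qed
  finally show ?thesis using 1 by simp
qed

lemma g_formula: assumes "A \<in> carrier_mat D D" "B \<in> carrier_mat D D" "R \<in> carrier_mat D D"
  shows "tr (dagger A * B * R) = (\<Sum>i<D. \<Sum>l<D. \<Sum>k<D. cnj (A$$(k,i)) * B$$(k,l) * R$$(l,i))"
proof -
  have d: "dim_row A = D" "dim_col A = D" "dim_row B = D" "dim_col B = D" "dim_row R = D" "dim_col R = D"
    using assms by auto
  have "tr (dagger A * B * R) = (\<Sum>i<D. \<Sum>l<D. (dagger A * B)$$(i,l) * R$$(l,i))"
    unfolding tr_def using d by (simp add: scalar_prod_def atLeast0LessThan)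
  also have "\<dots> = (\<Sum>i<D. \<Sum>l<D. (\<Sum>k<D. cnj (A$$(k,i)) * B$$(k,l)) * R$$(l,i))"
    by (intro sum.cong refl) (use d in \<open>simp add: scalar_prod_def atLeast0LessThan\<close>)
  also have "\<dots> = (\<Sum>i<D. \<Sum>l<D. \<Sum>k<D. cnj (A$$(k,i)) * B$$(k,l) * R$$(l,i))"
    by (simp add: sum_distrib_right)
  finally show ?thesis .
qed

lemma g_expand: assumes X: "X \<in> carrier_mat D D" and Y: "Y \<in> carrier_mat D D" and R: "R \<in> carrier_mat D D"
  shows "tr (dagger (X - Y) * (X - Y) * R) = tr (dagger X * X * R) - tr (dagger X * Y * R) - tr (dagger Y * X * R) + tr (dagger Y * Y * R)"
proof -
  have XY: "X - Y \<in> carrier_mat D D" by (rule minus_carrier_mat[OF Y])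
  have e: "\<And>k i. k < D \<Longrightarrow> i < D \<Longrightarrow> (X - Y)$$(k,i) = X$$(k,i) - Y$$(k,i)" using X Y by simp
  show ?thesis
    unfolding g_formula[OF XY XY R] g_formula[OF X X R] g_formula[OF X Y R] g_formula[OF Y X R] g_formula[OF Y Y R]
    by (simp add: e algebra_simps sum_subtractf sum.distrib)
qed

lemma g_psd: assumes Y: "Y \<in> carrier_mat D D" and R: "R \<in> carrier_mat D D"
  and psd: "\<forall>v \<in> carrier_vec D. 0 \<le> Re (conjugate v \<bullet> (R *\<^sub>v v))"
  shows "0 \<le> Re (tr (dagger Y * Y * R))"
proof -
  define w where "w k = vec D (\<lambda>i. cnj (Y$$(k,i)))" for k
  have q: "conjugate (w k) \<bullet> (R *\<^sub>v w k) = (\<Sum>l<D. \<Sum>i<D. Y$$(k,l) * R$$(l,i) * cnj (Y$$(k,i)))" for k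
    using R unfolding w_def by (simp add: scalar_prod_def atLeast0LessThan sum_distrib_left ac_simps)
  have "tr (dagger Y * Y * R) = (\<Sum>i<D. \<Sum>l<D. \<Sum>k<D. cnj (Y$$(k,i)) * Y$$(k,l) * R$$(l,i))"
    by (rule g_formula[OF Y Y R])
  also have "\<dots> = (\<Sum>k<D. \<Sum>l<D. \<Sum>i<D. Y$$(k,l) * R$$(l,i) * cnj (Y$$(k,i)))"
    apply (subst sum.swap)
    apply (subst (2) sum.swap)
    apply (rule sum.cong[OF refl])
    apply (subst sum.swap)
    by (simp add: ac_simps)
  also have "\<dots> = (\<Sum>k<D. conjugate (w k) \<bullet> (R *\<^sub>v w k))" by (simp add: q)
  finally have "Re (tr (dagger Y * Y * R)) = (\<Sum>k<D. Re (conjugate (w k) \<bullet> (R *\<^sub>v w k)))" by simp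
  also have "\<dots> \<ge> 0" using psd by (intro sum_nonneg) (simp add: w_def)
  finally show ?thesis .
qed

lemma cs_scalar: fixes h :: "nat \<Rightarrow> nat \<Rightarrow> complex"
  assumes "\<And>k l. k < N \<Longrightarrow> l < N \<Longrightarrow> 0 \<le> Re (h k k - h k l - h l k + h l l)"
  shows "Re (\<Sum>k<N. \<Sum>l<N. h k l) \<le> real N * (\<Sum>k<N. Re (h k k))"
proof -
  have "0 \<le> (\<Sum>k<N. \<Sum>l<N. Re (h k k - h k l - h l k + h l l))"
    using assms by (intro sum_nonneg) auto
  also have "\<dots> = (\<Sum>k<N. \<Sum>l<N. Re (h k k)) - (\<Sum>k<N. \<Sum>l<N. Re (h k l)) - (\<Sum>k<N. \<Sum>l<N. Re (h l k)) + (\<Sum>k<N. \<Sum>l<N. Re (h l l))"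
    by (simp add: sum_subtractf sum.distrib)
  also have "(\<Sum>k<N. \<Sum>l<N. Re (h l k)) = (\<Sum>k<N. \<Sum>l<N. Re (h k l))" by (rule sum.swap)
  also have "(\<Sum>k<N. \<Sum>l<N. Re (h l l)) = (\<Sum>k<N. \<Sum>l<N. Re (h k k))" by (rule sum.swap)
  also have "(\<Sum>k<N. \<Sum>l<N. Re (h k k)) = real N * (\<Sum>k<N. Re (h k k))"
    by (simp add: sum_distrib_left mult.commute)
  finally have "2 * (\<Sum>k<N. \<Sum>l<N. Re (h k l)) \<le> 2 * (real N * (\<Sum>k<N. Re (h k k)))" by linarith
  then show ?thesis by (simp add: Re_sum)
qed

lemma length_filter_product:
  "length (filter (\<lambda>(a,b). P a \<and> Q b) (List.product xs ys)) = length (filter P xs) * length (filter Q ys)"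
proof (induction xs)
  case Nil then show ?case by simp
next
  case (Cons x xs)
  have "length (filter (\<lambda>(a,b). P a \<and> Q b) (map (Pair x) ys)) = (if P x then length (filter Q ys) else 0)"
    by (induction ys) auto
  then show ?case using Cons by simp
qed

lemma length_filter_concat2:
  "length (filter P (concat (map (\<lambda>ys. [f ys, g ys]) L))) = length (filter (\<lambda>ys. P (f ys)) L) + length (filter (\<lambda>ys. P (g ys)) L)"
  by (induction L) auto

lemma hw_Cons[simp]: "hamming_weight (True # ys) = Suc (hamming_weight ys)" "hamming_weight (False # ys) = hamming_weight ys"
  by (simp_all add: hamming_weight_def)

lemma count_bound: "length (filter (\<lambda>a. hamming_weight a \<le> t) (bitstrings m)) \<le> (m+1)^t"
proof (induction m arbitrary: t)
  case 0
  then show ?case by (simp add: bitstrings_def)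
next
  case (Suc m)
  have bs: "bitstrings (Suc m) = concat (map (\<lambda>ys. [True # ys, False # ys]) (bitstrings m))"
    by (simp add: bitstrings_def)
  have e: "length (filter (\<lambda>a. hamming_weight a \<le> t) (bitstrings (Suc m)))
     = length (filter (\<lambda>ys. Suc (hamming_weight ys) \<le> t) (bitstrings m)) + length (filter (\<lambda>ys. hamming_weight ys \<le> t) (bitstrings m))"
    unfolding bs length_filter_concat2 by simp
  show ?case
  proof (cases t)
    case 0
    then show ?thesis using e Suc.IH[of 0] by simp
  next
    case (Suc t')
    have "length (filter (\<lambda>ys. Suc (hamming_weight ys) \<le> t) (bitstrings m)) \<le> (m+1)^t'"
      using Suc.IH[of t'] Suc by simp
    moreover have "length (filter (\<lambda>ys. hamming_weight ys \<le> t) (bitstrings m)) \<le> (m+1)^t" by (rule Suc.IH)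
    moreover have "(m+1)^t' + (m+1)^t \<le> (Suc m + 1)^t"
    proof -
      have "(m+1)^t' \<le> (m+2)^t'" by (rule power_mono) simp_all
      then have "(m+1)^t' + (m+1)^t = (m+1)^t' * (m+2)" using Suc by simp
      also have "\<dots> \<le> (m+2)^t' * (m+2)" using \<open>(m+1)^t' \<le> (m+2)^t'\<close> by (rule mult_right_mono) simp
      also have "\<dots> = (Suc m + 1)^t" using Suc by simp
      finally show ?thesis .
    qed
    ultimately show ?thesis using e by linarith
  qed
qed

lemma N_bound: "length (filter (\<lambda>(a,b). hamming_weight a \<le> t \<and> hamming_weight b \<le> t)
           (List.product (bitstrings m) (bitstrings m))) \<le> (m+1)^(2*t)"
proof -
  let ?c = "length (filter (\<lambda>a. hamming_weight a \<le> t) (bitstrings m))"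
  have "length (filter (\<lambda>(a,b). hamming_weight a \<le> t \<and> hamming_weight b \<le> t)
           (List.product (bitstrings m) (bitstrings m))) = ?c * ?c"
    by (rule length_filter_product)
  also have "\<dots> \<le> (m+1)^t * (m+1)^t" using count_bound by (intro mult_mono) auto
  also have "\<dots> = (m+1)^(2*t)" by (simp add: power_add[symmetric] mult_2)
  finally show ?thesis .
qed

lemma sl_upt: "sum_list (map f [0..<N]) = (\<Sum>k<N. f k)"
  by (induction N) auto

lemma g_left: assumes F: "\<And>x. x \<in> set xs \<Longrightarrow> F x \<in> carrier_mat D D"
  and B: "B \<in> carrier_mat D D" and R: "R \<in> carrier_mat D D"
  shows "tr (dagger (msum D D (map F xs)) * B * R) = sum_list (map (\<lambda>x. tr (dagger (F x) * B * R)) xs)"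
  using F
proof (induction xs)
  case Nil then show ?case using B R by simp
next
  case (Cons x xs)
  have Fx: "F x \<in> carrier_mat D D" using Cons.prems by simp
  have Ms: "msum D D (map F xs) \<in> carrier_mat D D" using Cons.prems by (intro msum_carrier) auto
  have IH: "tr (dagger (msum D D (map F xs)) * B * R) = sum_list (map (\<lambda>x. tr (dagger (F x) * B * R)) xs)"
    using Cons by simp
  have a: "dagger (msum D D (map F (x#xs))) = dagger (F x) + dagger (msum D D (map F xs))"
    using dagger_add[OF Fx Ms] by simp
  have "(dagger (F x) + dagger (msum D D (map F xs))) * B * R = dagger (F x) * B * R + dagger (msum D D (map F xs)) * B * R"
  proof -
    have dF: "dagger (F x) \<in> carrier_mat D D" and dM: "dagger (msum D D (map F xs)) \<in> carrier_mat D D"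
      using Fx Ms by simp_all
    have "(dagger (F x) + dagger (msum D D (map F xs))) * B = dagger (F x) * B + dagger (msum D D (map F xs)) * B"
      by (rule add_mult_distrib_mat[OF dF dM B])
    also have "\<dots> * R = dagger (F x) * B * R + dagger (msum D D (map F xs)) * B * R"
      by (rule add_mult_distrib_mat[OF mult_carrier_mat[OF dF B] mult_carrier_mat[OF dM B] R])
    finally show ?thesis .
  qed
  moreover have "tr (dagger (F x) * B * R + dagger (msum D D (map F xs)) * B * R) =
     tr (dagger (F x) * B * R) + tr (dagger (msum D D (map F xs)) * B * R)"
    using Fx Ms B R by (intro tr_add[of _ D]) auto
  ultimately show ?case using a IH by simp
qed

lemma g_right: assumes G: "\<And>y. y \<in> set ys \<Longrightarrow> G y \<in> carrier_mat D D"
  and A: "A \<in> carrier_mat D D" and R: "R \<in> carrier_mat D D"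
  shows "tr (dagger A * msum D D (map G ys) * R) = sum_list (map (\<lambda>y. tr (dagger A * G y * R)) ys)"
  using G
proof (induction ys)
  case Nil then show ?case using A R by simp
next
  case (Cons y ys)
  have Gy: "G y \<in> carrier_mat D D" using Cons.prems by simp
  have Ms: "msum D D (map G ys) \<in> carrier_mat D D" using Cons.prems by (intro msum_carrier) auto
  have IH: "tr (dagger A * msum D D (map G ys) * R) = sum_list (map (\<lambda>y. tr (dagger A * G y * R)) ys)"
    using Cons by simp
  have "dagger A * (G y + msum D D (map G ys)) * R = dagger A * G y * R + dagger A * msum D D (map G ys) * R"
  proof -
    have dA: "dagger A \<in> carrier_mat D D" using A by simp
    have "dagger A * (G y + msum D D (map G ys)) = dagger A * G y + dagger A * msum D D (map G ys)"
      by (rule mult_add_distrib_mat[OF dA Gy Ms])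
    also have "\<dots> * R = dagger A * G y * R + dagger A * msum D D (map G ys) * R"
      by (rule add_mult_distrib_mat[OF mult_carrier_mat[OF dA Gy] mult_carrier_mat[OF dA Ms] R])
    finally show ?thesis .
  qed
  moreover have "tr (dagger A * G y * R + dagger A * msum D D (map G ys) * R) =
     tr (dagger A * G y * R) + tr (dagger A * msum D D (map G ys) * R)"
    using Gy Ms A R by (intro tr_add[of _ D]) auto
  ultimately show ?case using IH by simp
qed


lemma tr_sandwich: assumes M: "M \<in> carrier_mat D D" and P: "P \<in> carrier_mat D D" and R: "R \<in> carrier_mat D D"
  and hM: "dagger M = M" and pM: "M * M = M" and hP: "dagger P = P" and PR: "P * R = R" and RP: "R * P = R"
  shows "tr (M * R) = tr (dagger (M * P) * (M * P) * R)"
proof -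
  have MP: "M * P \<in> carrier_mat D D" using M P by (rule mult_carrier_mat)
  have d: "dagger (M * P) = P * M" using dagger_mult[OF M P] hM hP by simp
  have "P * M * (M * P) = P * (M * (M * P))" by (rule assoc_mult_mat[OF P M MP])
  also have "M * (M * P) = M * P" using assoc_mult_mat[OF M M P] pM by simp
  finally have e: "dagger (M * P) * (M * P) = P * (M * P)" using d by simp
  have "tr (P * (M * P) * R) = tr (P * ((M * P) * R))" using assoc_mult_mat[OF P MP R] by simp
  also have "\<dots> = tr (((M * P) * R) * P)"
    by (rule tr_comm[OF P mult_carrier_mat[OF MP R]])
  also have "((M * P) * R) * P = (M * P) * (R * P)" by (rule assoc_mult_mat[OF MP R P])
  also have "\<dots> = M * (P * R)" using RP assoc_mult_mat[OF M P R] by simp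
  also have "\<dots> = M * R" using PR by simp
  finally show ?thesis using e by simp
qed

lemma XX: assumes K: "K \<in> carrier_mat D d" and M: "M \<in> carrier_mat D D" and hM: "dagger M = M" and pM: "M * M = M"
  and S: "S \<in> carrier_mat d d" and kmk: "dagger K * M * K = S"
  shows "dagger (M * (K * dagger K)) * (M * (K * dagger K)) = K * S * dagger K"
proof -
  let ?A = K let ?B = "dagger K"
  have B: "?B \<in> carrier_mat d D" using K by simp
  have AB: "?A * ?B \<in> carrier_mat D D" using K B by (rule mult_carrier_mat)
  have MAB: "M * (?A * ?B) \<in> carrier_mat D D" using M AB by (rule mult_carrier_mat)
  have "dagger (M * (?A * ?B)) = dagger (?A * ?B) * dagger M" by (rule dagger_mult[OF M AB])
  also have "dagger (?A * ?B) = dagger ?B * dagger ?A" by (rule dagger_mult[OF K B])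
  finally have d: "dagger (M * (?A * ?B)) = (?A * ?B) * M" using hM by simp
  have "(?A * ?B) * M * (M * (?A * ?B)) = (?A * ?B) * (M * (M * (?A * ?B)))"
    by (rule assoc_mult_mat[OF AB M MAB])
  also have "M * (M * (?A * ?B)) = M * (?A * ?B)" using assoc_mult_mat[OF M M AB] pM by simp
  also have "(?A * ?B) * (M * (?A * ?B)) = ?A * (?B * (M * (?A * ?B)))"
    by (rule assoc_mult_mat[OF K B MAB])
  also have "?B * (M * (?A * ?B)) = (?B * M) * (?A * ?B)"
    by (rule assoc_mult_mat[OF B M AB, symmetric])
  also have "\<dots> = ((?B * M) * ?A) * ?B"
    by (rule assoc_mult_mat[OF mult_carrier_mat[OF B M] K B, symmetric])
  also have "(?B * M) * ?A = S" using kmk by simp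
  also have "?A * (S * ?B) = (?A * S) * ?B" by (rule assoc_mult_mat[OF K S B, symmetric])
  finally show ?thesis using d by simp
qed

lemma lin_mid: assumes A: "A \<in> carrier_mat D d" and B: "B \<in> carrier_mat d D" and R: "R \<in> carrier_mat D D"
  and F: "\<And>y. y \<in> set ys \<Longrightarrow> F y \<in> carrier_mat d d"
  shows "tr (A * msum d d (map F ys) * B * R) = sum_list (map (\<lambda>y. tr (A * F y * B * R)) ys)"
  using F
proof (induction ys)
  case Nil
  have "A * 0\<^sub>m d d = 0\<^sub>m D d" using A by simp
  then have "A * 0\<^sub>m d d * B * R = 0\<^sub>m D D" using B R by simp
  then show ?case by simp
next
  case (Cons y ys)
  have Fy: "F y \<in> carrier_mat d d" using Cons.prems by simp
  have Ms: "msum d d (map F ys) \<in> carrier_mat d d" using Cons.prems by (intro msum_carrier) auto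
  have IH: "tr (A * msum d d (map F ys) * B * R) = sum_list (map (\<lambda>y. tr (A * F y * B * R)) ys)"
    using Cons by simp
  have "A * (F y + msum d d (map F ys)) = A * F y + A * msum d d (map F ys)"
    by (rule mult_add_distrib_mat[OF A Fy Ms])
  also have "\<dots> * B = A * F y * B + A * msum d d (map F ys) * B"
    by (rule add_mult_distrib_mat[OF mult_carrier_mat[OF A Fy] mult_carrier_mat[OF A Ms] B])
  also have "\<dots> * R = A * F y * B * R + A * msum d d (map F ys) * B * R"
    by (rule add_mult_distrib_mat[OF mult_carrier_mat[OF mult_carrier_mat[OF A Fy] B]
          mult_carrier_mat[OF mult_carrier_mat[OF A Ms] B] R])
  finally have e: "A * msum d d (map F (y # ys)) * B * R = A * F y * B * R + A * msum d d (map F ys) * B * R"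
    by simp
  have "tr (A * F y * B * R + A * msum d d (map F ys) * B * R) = tr (A * F y * B * R) + tr (A * msum d d (map F ys) * B * R)"
    using A Fy Ms B R by (intro tr_add[of _ D]) auto
  then show ?case using e IH by simp
qed

lemma smult_pull: assumes A: "A \<in> carrier_mat D d" and B: "B \<in> carrier_mat d D" and R: "R \<in> carrier_mat D D"
  and S: "S \<in> carrier_mat d d"
  shows "tr (A * (c \<cdot>\<^sub>m S) * B * R) = c * tr (A * S * B * R)"
proof -
  have "A * (c \<cdot>\<^sub>m S) = c \<cdot>\<^sub>m (A * S)" by (rule mult_smult_distrib[OF A S])
  moreover have "(c \<cdot>\<^sub>m (A * S)) * B = c \<cdot>\<^sub>m (A * S * B)" by (rule mult_smult_assoc_mat[OF mult_carrier_mat[OF A S] B])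
  moreover have "(c \<cdot>\<^sub>m (A * S * B)) * R = c \<cdot>\<^sub>m (A * S * B * R)"
    by (rule mult_smult_assoc_mat[OF mult_carrier_mat[OF mult_carrier_mat[OF A S] B] R])
  ultimately have "A * (c \<cdot>\<^sub>m S) * B * R = c \<cdot>\<^sub>m (A * S * B * R)" by simp
  moreover have "A * S * B * R \<in> carrier_mat D D" using A S B R by (meson mult_carrier_mat)
  ultimately show ?thesis by (simp add: tr_smult)
qed


theorem mainTheorem12:
  fixes m t d :: nat and \<theta> :: "bool list" and \<rho> :: "complex mat"
    and Proj :: "nat \<Rightarrow> complex mat"
  assumes "length \<theta> = m"
    and "density_matrix (2^m * 2^m * d) \<rho>"
    and "kron (Pi_EPR m t) (1\<^sub>m d) * \<rho> = \<rho>"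
    and "\<And>v. v < 2^m \<Longrightarrow> is_projector d (Proj v)"
    and "\<And>v w. v < 2^m \<Longrightarrow> w < 2^m \<Longrightarrow> v \<noteq> w \<Longrightarrow> Proj v * Proj w = 0\<^sub>m d d"
    and "msum d d (map Proj [0..<2^m]) = 1\<^sub>m d"
  shows "Re (\<Sum>v<2^m. tr (kron (kron (Hpow \<theta> * ket m v * dagger (ket m v) * Hpow \<theta>) (1\<^sub>m (2^m)))
              (Proj v) * \<rho>)) \<le> (m + 1) ^ (2 * t) / 2 ^ m"
proof -
  define D where "D = 2^m * 2^m * d"
  define L where "L = filter (\<lambda>(a,b). hamming_weight a \<le> t \<and> hamming_weight b \<le> t) (List.product (bitstrings m) (bitstrings m))"
  define N where "N = length L"
  define \<psi> where "\<psi> k = epr_ket m (fst (L!k)) (snd (L!k))" for k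
  define K where "K k = kron (\<psi> k) (1\<^sub>m d)" for k
  define P where "P = kron (Pi_EPR m t) (1\<^sub>m d)"
  define Q where "Q v = Hpow \<theta> * ket m v * dagger (ket m v) * Hpow \<theta>" for v
  define M where "M v = kron (kron (Q v) (1\<^sub>m (2^m))) (Proj v)" for v
  define s :: complex where "s = 1 / 2^m"
  have Llen: "length (fst (L!k)) = m \<and> length (snd (L!k)) = m" if "k < N" for k
  proof -
    have "L!k \<in> set (List.product (bitstrings m) (bitstrings m))"
      using that unfolding N_def L_def by (metis filter_is_subset nth_mem subsetD)
    then have "fst (L!k) \<in> set (bitstrings m)" "snd (L!k) \<in> set (bitstrings m)"
      by (simp_all only: set_product mem_Times_iff)
    then show ?thesis unfolding bitstrings_def by (simp add: length_n_lists_elem)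
  qed
  have psiC: "\<psi> k \<in> carrier_mat (2^m*2^m) 1" if "k < N" for k
    unfolding \<psi>_def using Llen[OF that] by (intro epr_carrier) auto
  have KC: "K k \<in> carrier_mat D d" if "k < N" for k
    unfolding K_def D_def using kron_carrier[OF psiC[OF that] one_carrier_mat[of d]] by simp
  have KKC: "K k * dagger (K k) \<in> carrier_mat D D" if "k < N" for k
    using KC[OF that] by (meson dagger_carrier mult_carrier_mat)
  have psiH: "\<psi> k * dagger (\<psi> k) \<in> carrier_mat (2^m*2^m) (2^m*2^m)" if "k < N" for k
    using psiC[OF that] by (meson dagger_carrier mult_carrier_mat)
  have KK: "K k * dagger (K k) = kron (\<psi> k * dagger (\<psi> k)) (1\<^sub>m d)" if "k < N" for k
  proof -
    have "K k * dagger (K k) = kron (\<psi> k) (1\<^sub>m d) * kron (dagger (\<psi> k)) (1\<^sub>m d)"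
      unfolding K_def by (simp add: dagger_kron)
    also have "\<dots> = kron (\<psi> k * dagger (\<psi> k)) (1\<^sub>m d * 1\<^sub>m d)"
      by (rule kron_mult[OF psiC[OF that] one_carrier_mat dagger_carrier[OF psiC[OF that]] one_carrier_mat])
    finally show ?thesis by simp
  qed
  have mapL: "map (\<lambda>(a,b). epr_ket m a b * dagger (epr_ket m a b)) L = map (\<lambda>k. \<psi> k * dagger (\<psi> k)) [0..<N]"
    unfolding N_def \<psi>_def by (rule nth_equalityI) (simp_all add: case_prod_beta)
  have PiEq: "Pi_EPR m t = msum (2^m*2^m) (2^m*2^m) (map (\<lambda>k. \<psi> k * dagger (\<psi> k)) [0..<N])"
    unfolding Pi_EPR_def L_def[symmetric] mapL ..
  have P_eq: "P = msum D D (map (\<lambda>k. K k * dagger (K k)) [0..<N])"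
  proof -
    have prem: "\<And>M. M \<in> set (map (\<lambda>k. \<psi> k * dagger (\<psi> k)) [0..<N]) \<Longrightarrow> M \<in> carrier_mat (2^m*2^m) (2^m*2^m)"
      by (auto intro: psiH)
    have "P = msum (2^m*2^m * d) (2^m*2^m * d) (map (\<lambda>M. kron M (1\<^sub>m d)) (map (\<lambda>k. \<psi> k * dagger (\<psi> k)) [0..<N]))"
      unfolding P_def PiEq using kron_msum_left[where Ms="map (\<lambda>k. \<psi> k * dagger (\<psi> k)) [0..<N]" and n="2^m*2^m" and k="2^m*2^m" and B="1\<^sub>m d", OF prem] by simp
    also have "map (\<lambda>M. kron M (1\<^sub>m d)) (map (\<lambda>k. \<psi> k * dagger (\<psi> k)) [0..<N]) = map (\<lambda>k. K k * dagger (K k)) [0..<N]"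
      by (simp add: KK)
    finally show ?thesis unfolding D_def by simp
  qed
  have PC: "P \<in> carrier_mat D D" unfolding P_eq by (rule msum_carrier) (auto intro: KKC)
  have hP: "dagger P = P"
  proof -
    have "dagger P = msum D D (map dagger (map (\<lambda>k. K k * dagger (K k)) [0..<N]))"
      unfolding P_eq by (rule dagger_msum) (auto intro: KKC)
    also have "map dagger (map (\<lambda>k. K k * dagger (K k)) [0..<N]) = map (\<lambda>k. K k * dagger (K k)) [0..<N]"
    proof -
      have "dagger (K k * dagger (K k)) = K k * dagger (K k)" if "k < N" for k
        using dagger_mult[OF KC[OF that] dagger_carrier[OF KC[OF that]]] by simp
      then show ?thesis by simp
    qed
    finally show ?thesis unfolding P_eq .
  qed
  have RC: "\<rho> \<in> carrier_mat D D" and hR: "dagger \<rho> = \<rho>" and trR: "tr \<rho> = 1"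
    and psd: "\<forall>v \<in> carrier_vec D. 0 \<le> Re (conjugate v \<bullet> (\<rho> *\<^sub>v v))"
    using assms(2) unfolding density_matrix_def D_def by auto
  have PR: "P * \<rho> = \<rho>" using assms(3) unfolding P_def .
  have RP: "\<rho> * P = \<rho>"
  proof -
    have "dagger (P * \<rho>) = dagger \<rho> * dagger P" by (rule dagger_mult[OF PC RC])
    then show ?thesis using PR hR hP by simp
  qed
  have trPR: "tr (P * \<rho>) = 1" using PR trR by simp
  have projC: "Proj v \<in> carrier_mat d d" and hPr: "dagger (Proj v) = Proj v" and pPr: "Proj v * Proj v = Proj v"
    if "v < 2^m" for v
    using assms(4)[OF that] unfolding is_projector_def by auto
  have QC: "Q v \<in> carrier_mat (2^m) (2^m)" and hQ: "dagger (Q v) = Q v" and pQ: "Q v * Q v = Q v"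
    and trQ: "tr (Q v) = 1" if "v < 2^m" for v
  proof -
    let ?w = "Hpow \<theta> * ket m v"
    have wC: "?w \<in> carrier_mat (2^m) 1" using Hpow_carrier[of \<theta>] assms(1) by (metis ket_carrier mult_carrier_mat)
    have Qw: "Q v = ?w * dagger ?w" unfolding Q_def by (rule Q_eq[OF assms(1)])
    have nw: "dagger ?w * ?w = 1\<^sub>m 1" by (rule w_norm[OF assms(1) that])
    show "Q v \<in> carrier_mat (2^m) (2^m)" unfolding Qw using wC by (meson dagger_carrier mult_carrier_mat)
    show "dagger (Q v) = Q v" "Q v * Q v = Q v" "tr (Q v) = 1" unfolding Qw using rank1_props[OF wC nw] by auto
  qed
  have MC: "M v \<in> carrier_mat D D" and hM: "dagger (M v) = M v" and pM: "M v * M v = M v" if "v < 2^m" for v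
    using M_props[OF QC[OF that] hQ[OF that] pQ[OF that] projC[OF that] hPr[OF that] pPr[OF that]]
    unfolding M_def D_def by auto
  have kmk: "dagger (K k) * M v * K k = s \<cdot>\<^sub>m Proj v" if "k < N" "v < 2^m" for k v
  proof -
    let ?a = "fst (L!k)" and ?b = "snd (L!k)"
    have la: "length ?a = m" "length ?b = m" using Llen[OF that(1)] by auto
    have "(dagger (\<psi> k) * kron (Q v) (1\<^sub>m (2^m)) * \<psi> k)$$(0,0)
        = cnj (complex_of_real (1 / sqrt (2^m))) * complex_of_real (1 / sqrt (2^m)) * tr (Q v)"
    proof (rule scalar_gen[OF U_carrier[OF la] U_unitary[OF la] QC[OF that(2)] psiC[OF that(1)]])
      fix i :: nat assume "i < 2^m * 2^m"
      then show "\<psi> k $$ (i,0) = complex_of_real (1 / sqrt (2^m)) * (Xpow ?a * Zpow ?b) $$ (i mod 2^m, i div 2^m)"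
        unfolding \<psi>_def by (rule epr_index[OF la])
    qed
    also have "\<dots> = s" using trQ[OF that(2)] c_sq[of m] unfolding s_def by simp
    finally have sc: "(dagger (\<psi> k) * kron (Q v) (1\<^sub>m (2^m)) * \<psi> k)$$(0,0) = s" .
    show ?thesis unfolding K_def M_def
      using KMK[OF psiC[OF that(1)] QC[OF that(2)] projC[OF that(2)]] sc by simp
  qed
  define X where "X v k = M v * (K k * dagger (K k))" for v k
  define h where "h v k l = tr (dagger (X v k) * X v l * \<rho>)" for v k l
  have XC: "X v k \<in> carrier_mat D D" if "v < 2^m" "k < N" for v k
    unfolding X_def using MC[OF that(1)] KKC[OF that(2)] by (rule mult_carrier_mat)
  have per_v: "tr (M v * \<rho>) = (\<Sum>k<N. \<Sum>l<N. h v k l)" if v: "v < 2^m" for v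
  proof -
    have "tr (M v * \<rho>) = tr (dagger (M v * P) * (M v * P) * \<rho>)"
      by (rule tr_sandwich[OF MC[OF v] PC RC hM[OF v] pM[OF v] hP PR RP])
    also have "M v * P = msum D D (map (X v) [0..<N])"
    proof -
      have "M v * P = msum D D (map ((*) (M v)) (map (\<lambda>k. K k * dagger (K k)) [0..<N]))"
        unfolding P_eq by (rule msum_mult_left[OF MC[OF v]]) (auto intro: KKC)
      then show ?thesis unfolding X_def by (simp add: comp_def)
    qed
    also have "tr (dagger (msum D D (map (X v) [0..<N])) * msum D D (map (X v) [0..<N]) * \<rho>)
       = sum_list (map (\<lambda>k. tr (dagger (X v k) * msum D D (map (X v) [0..<N]) * \<rho>)) [0..<N])"
    proof -
      have XsC: "msum D D (map (X v) [0..<N]) \<in> carrier_mat D D" by (rule msum_carrier) (auto intro: XC[OF v])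
      show ?thesis by (rule g_left[OF _ XsC RC]) (auto intro: XC[OF v])
    qed
    also have "\<dots> = sum_list (map (\<lambda>k. sum_list (map (\<lambda>l. h v k l) [0..<N])) [0..<N])"
    proof -
      have "tr (dagger (X v k) * msum D D (map (X v) [0..<N]) * \<rho>) = sum_list (map (\<lambda>l. h v k l) [0..<N])"
        if "k < N" for k
        unfolding h_def by (rule g_right[OF _ XC[OF v that] RC]) (auto intro: XC[OF v])
      then show ?thesis by (intro arg_cong[where f=sum_list] map_cong[OF refl]) simp
    qed
    finally show ?thesis by (simp add: sl_upt)
  qed
  have cs_v: "Re (\<Sum>k<N. \<Sum>l<N. h v k l) \<le> real N * (\<Sum>k<N. Re (h v k k))" if v: "v < 2^m" for v
  proof (rule cs_scalar)
    fix k l assume k: "k < N" and l: "l < N"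
    have "h v k k - h v k l - h v l k + h v l l = tr (dagger (X v k - X v l) * (X v k - X v l) * \<rho>)"
      unfolding h_def by (rule g_expand[OF XC[OF v k] XC[OF v l] RC, symmetric])
    also have "0 \<le> Re \<dots>" by (rule g_psd[OF minus_carrier_mat[OF XC[OF v l]] RC psd])
    finally show "0 \<le> Re (h v k k - h v k l - h v l k + h v l l)" .
  qed
  have hkk: "h v k k = s * tr (K k * Proj v * dagger (K k) * \<rho>)" if v: "v < 2^m" and k: "k < N" for v k
  proof -
    have "dagger (X v k) * X v k = K k * (s \<cdot>\<^sub>m Proj v) * dagger (K k)"
      unfolding X_def by (rule XX[OF KC[OF k] MC[OF v] hM[OF v] pM[OF v] _ kmk[OF k v]]) (use projC[OF v] in simp)
    then show ?thesis unfolding h_def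
      using smult_pull[OF KC[OF k] dagger_carrier[OF KC[OF k]] RC projC[OF v]] by simp
  qed
  have sum_v: "(\<Sum>v<2^m. tr (K k * Proj v * dagger (K k) * \<rho>)) = tr (K k * dagger (K k) * \<rho>)" if k: "k < N" for k
  proof -
    have "(\<Sum>v<2^m. tr (K k * Proj v * dagger (K k) * \<rho>)) = tr (K k * msum d d (map Proj [0..<2^m]) * dagger (K k) * \<rho>)"
      using lin_mid[OF KC[OF k] dagger_carrier[OF KC[OF k]] RC, of "[0..<2^m]" Proj] projC by (simp add: sl_upt)
    also have "\<dots> = tr (K k * dagger (K k) * \<rho>)" using assms(6) KC[OF k] by simp
    finally show ?thesis .
  qed
  have sum_k: "(\<Sum>k<N. tr (K k * dagger (K k) * \<rho>)) = 1"
  proof -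
    have Pm: "P * \<rho> = msum D D (map (\<lambda>M. M * \<rho>) (map (\<lambda>k. K k * dagger (K k)) [0..<N]))"
      unfolding P_eq by (rule msum_mult_right[OF RC]) (auto intro: KKC)
    then have "tr (P * \<rho>) = sum_list (map tr (map (\<lambda>M. M * \<rho>) (map (\<lambda>k. K k * dagger (K k)) [0..<N])))"
    proof -
      have pr: "\<And>M. M \<in> set (map (\<lambda>M. M * \<rho>) (map (\<lambda>k. K k * dagger (K k)) [0..<N])) \<Longrightarrow> M \<in> carrier_mat D D"
      proof -
        fix M assume "M \<in> set (map (\<lambda>M. M * \<rho>) (map (\<lambda>k. K k * dagger (K k)) [0..<N]))"
        then obtain k where k: "k < N" and "M = K k * dagger (K k) * \<rho>" by auto
        then show "M \<in> carrier_mat D D" using mult_carrier_mat[OF KKC[OF k] RC] by simp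
      qed
      show ?thesis using tr_msum[where Ms="map (\<lambda>M. M * \<rho>) (map (\<lambda>k. K k * dagger (K k)) [0..<N])" and n=D, OF pr] Pm by simp
    qed
    then show ?thesis using trPR by (simp add: sl_upt comp_def)
  qed
  have goal_eq: "(\<Sum>v<2^m. tr (kron (kron (Hpow \<theta> * ket m v * dagger (ket m v) * Hpow \<theta>) (1\<^sub>m (2^m))) (Proj v) * \<rho>))
      = (\<Sum>v<2^m. tr (M v * \<rho>))" by (simp add: M_def Q_def)
  have "Re (\<Sum>v<2^m. tr (M v * \<rho>)) = (\<Sum>v<2^m. Re (\<Sum>k<N. \<Sum>l<N. h v k l))"
    by (simp add: per_v Re_sum)
  also have "\<dots> \<le> (\<Sum>v<(2::nat)^m. real N * (\<Sum>k<N. Re (h v k k)))"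
    by (rule sum_mono, rule cs_v) simp
  also have "\<dots> = real N * Re (\<Sum>k<N. s * (\<Sum>v<2^m. tr (K k * Proj v * dagger (K k) * \<rho>)))"
    by (simp add: sum_distrib_left Re_sum hkk sum.swap[of _ "{..<2^m}"])
  also have "\<dots> = real N * Re (s * (\<Sum>k<N. tr (K k * dagger (K k) * \<rho>)))"
    by (simp add: sum_v sum_distrib_left)
  also have "\<dots> = real N / 2^m" using sum_k unfolding s_def by simp
  also have "\<dots> \<le> (m + 1) ^ (2 * t) / 2 ^ m"
  proof -
    have "N \<le> (m+1)^(2*t)" unfolding N_def L_def by (rule N_bound)
    then have "real N \<le> (m+1)^(2*t)" by (metis of_nat_le_iff of_nat_power of_nat_Suc Suc_eq_plus1)
    then show ?thesis by (simp add: divide_right_mono)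
  qed
  finally show ?thesis using goal_eq by simp
qed

end
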